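(* For every $n\ge2$ and $m\in\{0,1,2,3\}$ let $U_{n,m}=\sum_{k=0}^{n-2}\frac{k^m(n+k-2)!}{k!\,2^k}$ (with $0^0=1$). Then $U_{n,0}=(2n-4)!!$, $U_{n,1}=(n-1)(2n-4)!!-(2n-3)!!$, $U_{n,2}=(n^2-1)(2n-4)!!-(2n-1)(2n-3)!!$, $U_{n,3}=(n^3+3n^2-3n-1)(2n-4)!!-(3n^2+n-1)(2n-3)!!$.
   Context: Double factorials: $(2m-1)!!=(2m-1)(2m-3)\cdots3\cdot1$, $(2m)!!=(2m)(2m-2)\cdots2$, with $0!!=1$. *)

theory Defs
  imports Complex_Main
begin

fun dfact :: "nat \<Rightarrow> nat" where
  "dfact 0 = 1"
| "dfact (Suc 0) = 1"
| "dfact (Suc (Suc n)) = Suc (Suc n) * dfact n"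

definition U :: "nat \<Rightarrow> nat \<Rightarrow> real" where
  "U n m = (\<Sum>k = 0..n-2. real (k ^ m) * fact (n + k - 2) / (fact k * 2 ^ k))"

end

theory Submission
  imports Defs
begin

definition bb :: "nat \<Rightarrow> nat \<Rightarrow> real" where
  "bb N k = fact (N + k) / (fact k * 2 ^ k)"

lemma bb_Suc0: "bb (Suc N) 0 = (N+1) * bb N 0"
  by (simp add: bb_def)

lemma bb_pascal: "bb (Suc N) (Suc k) = (N+1) * bb N (Suc k) + bb (Suc N) k / 2"
proof -
  define a where "a = (fact (N + k + 1) :: real) / (fact k * 2^k)"
  have f1: "fact (Suc N + Suc k) = (real N + real k + 2) * (fact (N + k + 1) :: real)"
    by (simp add: algebra_simps)
  have f2: "fact (N + Suc k) = (fact (N + k + 1) :: real)" by simp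
  have f3: "fact (Suc N + k) = (fact (N + k + 1) :: real)" by simp
  have f4: "fact (Suc k) = (real k + 1) * (fact k :: real)" by simp
  have l: "bb (Suc N) (Suc k) = (real N + real k + 2) * a / ((real k + 1) * 2)"
    unfolding bb_def a_def f1 f4 by (simp add: field_simps)
  have r1: "bb N (Suc k) = a / ((real k + 1) * 2)"
    unfolding bb_def a_def f2 f4 by (simp add: field_simps)
  have r2: "bb (Suc N) k = a"
    unfolding bb_def a_def f3 by simp
  have kp: "real k + 1 \<noteq> 0" by linarith
  show ?thesis unfolding l r1 r2 using kp by (simp add: field_simps)
qed

lemma bb_diag: "bb (Suc N) (Suc N) = real (dfact (2*N+1))"
proof (induction N)
  case 0 then show ?case by (simp add: bb_def)
next
  case (Suc N)
  have e: "2 * Suc N + 1 = Suc (Suc (2*N+1))" by simp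
  define a where "a = (fact (Suc N + Suc N) :: real) / (fact (Suc N) * 2 ^ Suc N)"
  have f1: "fact (Suc (Suc N) + Suc (Suc N)) = (2 * real N + 4) * (2 * real N + 3) * (fact (Suc N + Suc N) :: real)"
    by (simp add: algebra_simps numeral_eq_Suc)
  have f2: "fact (Suc (Suc N)) = (real N + 2) * (fact (Suc N) :: real)" by simp
  have l: "bb (Suc (Suc N)) (Suc (Suc N)) = (2 * real N + 4) * (2 * real N + 3) * a / ((real N + 2) * 2)"
    unfolding bb_def a_def f1 f2 by (simp add: field_simps)
  have np: "real N + 2 \<noteq> 0" by linarith
  have "bb (Suc (Suc N)) (Suc (Suc N)) = real (2*N+3) * bb (Suc N) (Suc N)"
  proof -
    have r: "bb (Suc N) (Suc N) = a" by (simp add: a_def bb_def)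
    show ?thesis unfolding l r using np by (simp add: field_simps)
  qed
  then show ?case using Suc e by (simp add: algebra_simps)
qed

lemma bb_off: "bb N (Suc N) * (2 * real N + 2) = bb (Suc N) (Suc N)"
proof -
  have f1: "fact (Suc N + Suc N) = real (2*N+2) * (fact (N + Suc N) :: real)"
    by (simp add: algebra_simps)
  show ?thesis unfolding bb_def f1 by (simp add: field_simps)
qed

lemma gen_rec:
  fixes w :: "nat \<Rightarrow> real"
  shows "(\<Sum>k\<le>Suc N. w k * bb (Suc N) k) =
     real (N+1) * (\<Sum>k\<le>Suc N. w k * bb N k) + (1/2) * (\<Sum>k\<le>N. w (Suc k) * bb (Suc N) k)"
proof -
  have "(\<Sum>k\<le>Suc N. w k * bb (Suc N) k) = w 0 * bb (Suc N) 0 + (\<Sum>k\<le>N. w (Suc k) * bb (Suc N) (Suc k))"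
    by (rule sum.atMost_Suc_shift)
  also have "\<dots> = real (N+1) * (w 0 * bb N 0 + (\<Sum>k\<le>N. w (Suc k) * bb N (Suc k)))
       + (1/2) * (\<Sum>k\<le>N. w (Suc k) * bb (Suc N) k)"
    by (simp add: bb_Suc0 bb_pascal algebra_simps sum.distrib sum_distrib_left sum_divide_distrib)
  also have "w 0 * bb N 0 + (\<Sum>k\<le>N. w (Suc k) * bb N (Suc k)) = (\<Sum>k\<le>Suc N. w k * bb N k)"
    by (rule sum.atMost_Suc_shift[symmetric])
  finally show ?thesis .
qed

definition S :: "nat \<Rightarrow> nat \<Rightarrow> real" where
  "S m N = (\<Sum>k\<le>N. real k ^ m * bb N k)"

lemma dE: "dfact (2 * Suc N) = (2*N+2) * dfact (2*N)"
proof -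
  have "2 * Suc N = Suc (Suc (2*N))" by simp
  then show ?thesis by simp
qed

lemma dD: "dfact (2 * Suc N + 1) = (2*N+3) * dfact (2*N+1)"
proof -
  have "2 * Suc N + 1 = Suc (Suc (2*N+1))" by simp
  then show ?thesis by (simp add: algebra_simps)
qed

lemma main:
  "S 0 N = dfact (2*N) \<and>
   S 1 N = (real N + 1) * dfact (2*N) - dfact (2*N+1) \<and>
   S 2 N = ((real N + 2)^2 - 1) * dfact (2*N) - (2 * real N + 3) * dfact (2*N+1) \<and>
   S 3 N = ((real N + 2)^3 + 3*(real N + 2)^2 - 3*(real N + 2) - 1) * dfact (2*N)
           - (3*(real N + 2)^2 + (real N + 2) - 1) * dfact (2*N+1)"
proof (induction N)
  case 0
  then show ?case by (simp add: S_def bb_def)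
next
  case (Suc N)
  define E where "E = real (dfact (2*N))"
  define D where "D = real (dfact (2*N+1))"
  define B where "B = bb N (Suc N)"
  have BD: "B * (2 * real N + 2) = D" unfolding B_def D_def using bb_off bb_diag by simp
  have B2: "bb (Suc N) (Suc N) = D" unfolding D_def by (rule bb_diag)
  have rec: "S m (Suc N) = (N+1) * (S m N + (real N + 1)^m * B)
      + (1/2) * ((\<Sum>k\<le>Suc N. (real k + 1)^m * bb (Suc N) k) - (real N + 2)^m * D)" for m
  proof -
    have "S m (Suc N) = (N+1) * (\<Sum>k\<le>Suc N. real k ^ m * bb N k) + (1/2) * (\<Sum>k\<le>N. real (Suc k) ^ m * bb (Suc N) k)"
      unfolding S_def by (rule gen_rec)
    moreover have "(\<Sum>k\<le>Suc N. real k ^ m * bb N k) = S m N + (real N + 1)^m * B"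
      by (simp add: S_def B_def add.commute)
    moreover have "(\<Sum>k\<le>N. real (Suc k) ^ m * bb (Suc N) k) = (\<Sum>k\<le>Suc N. (real k + 1)^m * bb (Suc N) k) - (real N + 2)^m * D"
      using B2 by (simp add: add_ac)
    ultimately show ?thesis by simp
  qed
  have p1: "(\<Sum>k\<le>Suc N. (real k + 1)^1 * bb (Suc N) k) = S 1 (Suc N) + S 0 (Suc N)"
    by (simp add: S_def algebra_simps sum.distrib)
  have p2: "(\<Sum>k\<le>Suc N. (real k + 1)^2 * bb (Suc N) k) = S 2 (Suc N) + 2 * S 1 (Suc N) + S 0 (Suc N)"
    by (simp add: S_def algebra_simps sum.distrib sum_distrib_left power2_eq_square)
  have p3: "(\<Sum>k\<le>Suc N. (real k + 1)^3 * bb (Suc N) k) = S 3 (Suc N) + 3 * S 2 (Suc N) + 3 * S 1 (Suc N) + S 0 (Suc N)"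
    by (simp add: S_def algebra_simps sum.distrib sum_distrib_left power3_eq_cube power2_eq_square)
  have p0: "(\<Sum>k\<le>Suc N. (real k + 1)^0 * bb (Suc N) k) = S 0 (Suc N)"
    by (simp add: S_def)
  have E1: "real (dfact (2 * Suc N)) = (2 * real N + 2) * E" unfolding E_def dE by (simp add: algebra_simps)
  have D1: "real (dfact (2 * Suc N + 1)) = (2 * real N + 3) * D" unfolding D_def dD by (simp add: algebra_simps)
  have IH0: "S 0 N = E" and IH1: "S 1 N = (real N + 1) * E - D"
    and IH2: "S 2 N = ((real N + 2)^2 - 1) * E - (2 * real N + 3) * D"
    and IH3: "S 3 N = ((real N + 2)^3 + 3*(real N + 2)^2 - 3*(real N + 2) - 1) * E
           - (3*(real N + 2)^2 + (real N + 2) - 1) * D"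
    using Suc.IH unfolding E_def D_def by auto
  have rec2: "2 * S m (Suc N) = 2*(real N+1)*S m N + (real N+1)^m*D
      + (\<Sum>k\<le>Suc N. (real k + 1)^m * bb (Suc N) k) - (real N + 2)^m * D" for m
  proof -
    have F: "(real N+1)*((real N+1)^m*B) = (real N+1)^m*D/2"
      by (subst BD[symmetric]) (simp add: algebra_simps)
    show ?thesis using rec[of m] F by (simp add: ring_distribs)
  qed
  have s0: "S 0 (Suc N) = 2*(real N+1)*S 0 N"
    using rec2[of 0, unfolded p0] by simp
  have s0': "S 0 (Suc N) = (2 * real N + 2) * E"
    using s0 IH0 by (simp add: algebra_simps)
  have s1: "S 1 (Suc N) = 2*(real N+1)*S 1 N - D + S 0 (Suc N)"
    using rec2[of 1, unfolded p1] by (simp add: algebra_simps)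
  have s1': "S 1 (Suc N) = (real (Suc N) + 1) * ((2 * real N + 2) * E) - (2 * real N + 3) * D"
    unfolding s1 s0' IH1 by (simp add: algebra_simps)
  have s2: "S 2 (Suc N) = 2*(real N+1)*S 2 N + ((real N+1)^2 - (real N+2)^2)*D + 2 * S 1 (Suc N) + S 0 (Suc N)"
    using rec2[of 2, unfolded p2] by (simp add: left_diff_distrib)
  have s2': "S 2 (Suc N) = ((real (Suc N) + 2)^2 - 1) * ((2 * real N + 2) * E) - (2 * real (Suc N) + 3) * ((2 * real N + 3) * D)"
    unfolding s2 s1' s0' IH2 by (simp add: algebra_simps power2_eq_square)
  have s3: "S 3 (Suc N) = 2*(real N+1)*S 3 N + ((real N+1)^3 - (real N+2)^3)*D + 3 * S 2 (Suc N) + 3 * S 1 (Suc N) + S 0 (Suc N)"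
    using rec2[of 3, unfolded p3] by (simp add: left_diff_distrib)
  have s3': "S 3 (Suc N) = ((real (Suc N) + 2)^3 + 3*(real (Suc N) + 2)^2 - 3*(real (Suc N) + 2) - 1) * ((2 * real N + 2) * E)
           - (3*(real (Suc N) + 2)^2 + (real (Suc N) + 2) - 1) * ((2 * real N + 3) * D)"
    unfolding s3 s2' s1' s0' IH3 by (simp add: algebra_simps power2_eq_square power3_eq_cube)
  show ?case unfolding E1 D1 using s0' s1' s2' s3' by simp
qed

theorem lemma10:
  fixes n :: nat
  assumes "n \<ge> 2"
  shows "U n 0 = real (dfact (2*n - 4)) \<and>
         U n 1 = (real n - 1) * dfact (2*n - 4) - dfact (2*n - 3) \<and>
         U n 2 = ((real n)^2 - 1) * dfact (2*n - 4) - (2 * real n - 1) * dfact (2*n - 3) \<and>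
         U n 3 = ((real n)^3 + 3 * (real n)^2 - 3 * real n - 1) * dfact (2*n - 4)
                 - (3 * (real n)^2 + real n - 1) * dfact (2*n - 3)"
proof -
  obtain N where n: "n = N + 2" using assms le_Suc_ex by (metis add.commute)
  have US: "U n m = S m N" for m
    unfolding U_def S_def bb_def n by (simp add: atLeast0AtMost)
  have a: "2*n - 4 = 2*N" and b: "2*n - 3 = 2*N+1" using n by auto
  have rn: "real n = real N + 2" using n by simp
  show ?thesis unfolding US a b rn using main[of N] by (simp add: algebra_simps)
qed

end
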